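(* Let $n\ge 1$ and let $M$ be an $R[n]$-module. Then $M$ is isomorphic, as an $R[n]$-module, to a neural ring $R_\mathcal C$ for some code $\mathcal C\subseteq\{0,1\}^n$ if and only if $M$ has an $\mathbb F_2$-basis $\rho_1,\dots,\rho_d$ such that: (1) for all $i\in[n]$ and $j\in[d]$, $x_i\cdot\rho_j\in\{\rho_j,0\}$; (2) for all distinct $j,k\in[d]$ there exists at least one $i\in[n]$ such that exactly one of $x_i\cdot\rho_j$ and $x_i\cdot\rho_k$ is $0$.
   Context: A neural code on $n$ neurons is a subset $\mathcal C\subseteq\{0,1\}^n$. Its ideal is $I_\mathcal C=\{f\in\mathbb F_2[x_1,\dots,x_n]: f(c)=0 \text{ for all } c\in\mathcal C\}$ and its neural ring is $R_\mathcal C=\mathbb F_2[x_1,\dots,x_n]/I_\mathcal C$, identified with the ring of all functions $\mathcal C\to\{0,1\}=\mathbb F_2$. Write $R[n]=\mathbb F_2[x_1,\dots,x_n]/\langle x_i^2-x_i : i\in[n]\rangle$, the neural ring of the full code $\{0,1\}^n$. For $\mathcal C\subseteq\{0,1\}^n$, $R_\mathcal C$ is an $R[n]$-module via $(r\cdot f)(c)=r(c)f(c)$ for $c\in\mathcal C$. *)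

theory Defs
  imports "HOL-Algebra.Module" "HOL-Algebra.FiniteProduct"
begin

text \<open>Binary words of length n: functions nat => bool vanishing from index n on.
  Neuron i (1-based in the paper) corresponds to index i-1 here.\<close>
definition cube :: "nat \<Rightarrow> (nat \<Rightarrow> bool) set" where
  "cube n = {c. \<forall>i\<ge>n. \<not> c i}"

text \<open>Functions on a code C with values in F2 = bool (True = 1), extended by False off C.\<close>
definition fun_on :: "(nat \<Rightarrow> bool) set \<Rightarrow> ((nat \<Rightarrow> bool) \<Rightarrow> bool) set" where
  "fun_on C = {f. \<forall>c. c \<notin> C \<longrightarrow> \<not> f c}"

text \<open>The neural ring R_C, identified with the ring of all functions C -> F2
  (addition = xor, multiplication = and).\<close>
definition neural_ring :: "(nat \<Rightarrow> bool) set \<Rightarrow> ((nat \<Rightarrow> bool) \<Rightarrow> bool) ring" where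
  "neural_ring C = \<lparr> carrier = fun_on C,
      mult = (\<lambda>f g c. f c \<and> g c),
      one = (\<lambda>c. c \<in> C),
      zero = (\<lambda>c. False),
      add = (\<lambda>f g c. f c \<noteq> g c) \<rparr>"

definition Rn :: "nat \<Rightarrow> ((nat \<Rightarrow> bool) \<Rightarrow> bool) ring" where
  "Rn n = neural_ring (cube n)"

definition xvar :: "nat \<Rightarrow> nat \<Rightarrow> ((nat \<Rightarrow> bool) \<Rightarrow> bool)" where
  "xvar n i = (\<lambda>c. c \<in> cube n \<and> c i)"

definition neural_module ::
  "nat \<Rightarrow> (nat \<Rightarrow> bool) set \<Rightarrow> ((nat \<Rightarrow> bool) \<Rightarrow> bool, (nat \<Rightarrow> bool) \<Rightarrow> bool) module" where
  "neural_module n C = \<lparr> carrier = fun_on C,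
      mult = (\<lambda>f g c. f c \<and> g c),
      one = (\<lambda>c. c \<in> C),
      zero = (\<lambda>c. False),
      add = (\<lambda>f g c. f c \<noteq> g c),
      smult = (\<lambda>r f c. c \<in> C \<and> r c \<and> f c) \<rparr>"

definition module_iso ::
  "('r, 'm) ring_scheme \<Rightarrow> ('r, 'a, 'x) module_scheme \<Rightarrow> ('r, 'b, 'y) module_scheme
     \<Rightarrow> ('a \<Rightarrow> 'b) \<Rightarrow> bool" where
  "module_iso R M N f \<longleftrightarrow>
     bij_betw f (carrier M) (carrier N) \<and>
     (\<forall>x\<in>carrier M. \<forall>y\<in>carrier M. f (x \<oplus>\<^bsub>M\<^esub> y) = f x \<oplus>\<^bsub>N\<^esub> f y) \<and>
     (\<forall>r\<in>carrier R. \<forall>x\<in>carrier M. f (r \<odot>\<^bsub>M\<^esub> x) = r \<odot>\<^bsub>N\<^esub> f x)"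

definition f2_const :: "('r, 'm) ring_scheme \<Rightarrow> bool \<Rightarrow> 'r" where
  "f2_const R b = (if b then \<one>\<^bsub>R\<^esub> else \<zero>\<^bsub>R\<^esub>)"

text \<open>rho 0, ..., rho (d-1) is an F2-basis of the R-module M (M viewed as an F2-vector
  space by restriction of scalars along F2 -> R): every element is a unique
  F2-linear combination of the rho j.\<close>
definition f2_basis ::
  "('r, 'm) ring_scheme \<Rightarrow> ('r, 'a, 'x) module_scheme \<Rightarrow> nat \<Rightarrow> (nat \<Rightarrow> 'a) \<Rightarrow> bool" where
  "f2_basis R M d \<rho> \<longleftrightarrow>
     (\<forall>j<d. \<rho> j \<in> carrier M) \<and>
     (\<forall>m\<in>carrier M. \<exists>!a. a \<in> extensional {..<d} \<and>
        m = finsum M (\<lambda>j. f2_const R (a j) \<odot>\<^bsub>M\<^esub> \<rho> j) {..<d})"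

end

theory Submission imports Defs begin

lemma Rn_simps:
  "carrier (Rn n) = fun_on (cube n)"
  "\<one>\<^bsub>Rn n\<^esub> = (\<lambda>c. c \<in> cube n)"
  "\<zero>\<^bsub>Rn n\<^esub> = (\<lambda>c. False)"
  "(\<oplus>\<^bsub>Rn n\<^esub>) = (\<lambda>f g c. f c \<noteq> g c)"
  "(\<otimes>\<^bsub>Rn n\<^esub>) = (\<lambda>f g c. f c \<and> g c)"
  by (simp_all add: Rn_def neural_ring_def)

lemma nm_simps:
  "carrier (neural_module n C) = fun_on C"
  "\<zero>\<^bsub>neural_module n C\<^esub> = (\<lambda>c. False)"
  "(\<oplus>\<^bsub>neural_module n C\<^esub>) = (\<lambda>f g c. f c \<noteq> g c)"
  "(\<odot>\<^bsub>neural_module n C\<^esub>) = (\<lambda>r f c. c \<in> C \<and> r c \<and> f c)"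
  by (simp_all add: neural_module_def)

lemma ex1_eqD: "\<exists>!x. P x \<Longrightarrow> P a \<Longrightarrow> P b \<Longrightarrow> a = b" by blast

locale NM = module "Rn n" M for n and M :: "((nat \<Rightarrow> bool) \<Rightarrow> bool, 'a, 'x) module_scheme"
begin

lemma two_zero: assumes "x \<in> carrier M" shows "x \<oplus>\<^bsub>M\<^esub> x = \<zero>\<^bsub>M\<^esub>"
proof -
  have o: "\<one>\<^bsub>Rn n\<^esub> \<in> carrier (Rn n)" by simp
  have "x \<oplus>\<^bsub>M\<^esub> x = \<one>\<^bsub>Rn n\<^esub> \<odot>\<^bsub>M\<^esub> x \<oplus>\<^bsub>M\<^esub> \<one>\<^bsub>Rn n\<^esub> \<odot>\<^bsub>M\<^esub> x" using assms by simp
  also have "\<dots> = (\<one>\<^bsub>Rn n\<^esub> \<oplus>\<^bsub>Rn n\<^esub> \<one>\<^bsub>Rn n\<^esub>) \<odot>\<^bsub>M\<^esub> x"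
    using smult_l_distr[OF o o assms] by simp
  also have "\<one>\<^bsub>Rn n\<^esub> \<oplus>\<^bsub>Rn n\<^esub> \<one>\<^bsub>Rn n\<^esub> = \<zero>\<^bsub>Rn n\<^esub>" by (simp add: Rn_simps)
  finally show ?thesis using assms by simp
qed

lemma cancel2:
  assumes p: "p \<in> carrier M" and q: "q \<in> carrier M" and r: "r \<in> carrier M"
  shows "(p \<oplus>\<^bsub>M\<^esub> q) \<oplus>\<^bsub>M\<^esub> (r \<oplus>\<^bsub>M\<^esub> q) = p \<oplus>\<^bsub>M\<^esub> r"
proof -
  have 1: "(p \<oplus>\<^bsub>M\<^esub> q) \<oplus>\<^bsub>M\<^esub> (r \<oplus>\<^bsub>M\<^esub> q) = p \<oplus>\<^bsub>M\<^esub> (q \<oplus>\<^bsub>M\<^esub> (r \<oplus>\<^bsub>M\<^esub> q))"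
    using p q r by (simp add: a_assoc)
  have 2: "r \<oplus>\<^bsub>M\<^esub> q = q \<oplus>\<^bsub>M\<^esub> r" by (rule a_comm[OF r q])
  have 3: "q \<oplus>\<^bsub>M\<^esub> (q \<oplus>\<^bsub>M\<^esub> r) = (q \<oplus>\<^bsub>M\<^esub> q) \<oplus>\<^bsub>M\<^esub> r"
    using q r by (simp add: a_assoc)
  have "(p \<oplus>\<^bsub>M\<^esub> q) \<oplus>\<^bsub>M\<^esub> (r \<oplus>\<^bsub>M\<^esub> q) = p \<oplus>\<^bsub>M\<^esub> (q \<oplus>\<^bsub>M\<^esub> (r \<oplus>\<^bsub>M\<^esub> q))" by (rule 1)
  also have "\<dots> = p \<oplus>\<^bsub>M\<^esub> (q \<oplus>\<^bsub>M\<^esub> (q \<oplus>\<^bsub>M\<^esub> r))" by (simp only: 2)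
  also have "\<dots> = p \<oplus>\<^bsub>M\<^esub> ((q \<oplus>\<^bsub>M\<^esub> q) \<oplus>\<^bsub>M\<^esub> r)" by (simp only: 3)
  also have "\<dots> = p \<oplus>\<^bsub>M\<^esub> r" using two_zero[OF q] r by simp
  finally show ?thesis .
qed

lemma f2_sum:
  fixes d :: nat
  assumes "\<forall>j<d. \<rho> j \<in> carrier M"
  shows "finsum M (\<lambda>j. f2_const (Rn n) (a j) \<odot>\<^bsub>M\<^esub> \<rho> j) {..<d} = finsum M \<rho> {j. j<d \<and> a j}"
proof -
  have "finsum M \<rho> {j. j<d \<and> a j} = finsum M (\<lambda>j. f2_const (Rn n) (a j) \<odot>\<^bsub>M\<^esub> \<rho> j) {..<d}"
    by (rule add.finprod_mono_neutral_cong_left) (use assms in \<open>auto simp: f2_const_def\<close>)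
  then show ?thesis by simp
qed

lemma basis_iff:
  fixes d :: nat
  assumes r: "\<forall>j<d. \<rho> j \<in> carrier M"
  shows "f2_basis (Rn n) M d \<rho> \<longleftrightarrow> (\<forall>m\<in>carrier M. \<exists>!A. A \<subseteq> {..<d} \<and> m = finsum M \<rho> A)"
proof
  assume b: "f2_basis (Rn n) M d \<rho>"
  show "\<forall>m\<in>carrier M. \<exists>!A. A \<subseteq> {..<d} \<and> m = finsum M \<rho> A"
  proof
    fix m assume m: "m \<in> carrier M"
    have "\<forall>m\<in>carrier M. \<exists>!a. a \<in> extensional {..<d} \<and> m = finsum M (\<lambda>j. f2_const (Rn n) (a j) \<odot>\<^bsub>M\<^esub> \<rho> j) {..<d}"
      using b unfolding f2_basis_def by (rule conjunct2)
    then have ex: "\<exists>!a. a \<in> extensional {..<d} \<and> m = finsum M (\<lambda>j. f2_const (Rn n) (a j) \<odot>\<^bsub>M\<^esub> \<rho> j) {..<d}"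
      using m by (rule bspec)
    obtain a where a: "a \<in> extensional {..<d}"
        "m = finsum M (\<lambda>j. f2_const (Rn n) (a j) \<odot>\<^bsub>M\<^esub> \<rho> j) {..<d}"
      and u: "\<And>a'. a' \<in> extensional {..<d} \<Longrightarrow> m = finsum M (\<lambda>j. f2_const (Rn n) (a' j) \<odot>\<^bsub>M\<^esub> \<rho> j) {..<d} \<Longrightarrow> a' = a"
      using ex by (elim ex1E) blast
    show "\<exists>!A. A \<subseteq> {..<d} \<and> m = finsum M \<rho> A"
    proof
      show "{j. j<d \<and> a j} \<subseteq> {..<d} \<and> m = finsum M \<rho> {j. j<d \<and> a j}"
        using a f2_sum[OF r] by auto
    next
      fix A assume A: "A \<subseteq> {..<d} \<and> m = finsum M \<rho> A"
      let ?a = "restrict (\<lambda>j. j \<in> A) {..<d}"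
      have e: "{j. j<d \<and> ?a j} = A" using A by auto
      have "?a = a" apply (rule u) using A f2_sum[OF r, of ?a] e by auto
      then show "A = {j. j<d \<and> a j}" using e by simp
    qed
  qed
next
  assume u: "\<forall>m\<in>carrier M. \<exists>!A. A \<subseteq> {..<d} \<and> m = finsum M \<rho> A"
  show "f2_basis (Rn n) M d \<rho>" unfolding f2_basis_def
  proof (intro conjI ballI r)
    fix m assume m: "m \<in> carrier M"
    have ex: "\<exists>!A. A \<subseteq> {..<d} \<and> m = finsum M \<rho> A" using u m by (rule bspec)
    obtain A where A: "A \<subseteq> {..<d}" "m = finsum M \<rho> A"
      and uA: "\<And>B. B \<subseteq> {..<d} \<Longrightarrow> m = finsum M \<rho> B \<Longrightarrow> B = A" using ex by (elim ex1E) blast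
    let ?a = "restrict (\<lambda>j. j \<in> A) {..<d}"
    have e: "{j. j<d \<and> ?a j} = A" using A by auto
    show "\<exists>!a. a \<in> extensional {..<d} \<and> m = finsum M (\<lambda>j. f2_const (Rn n) (a j) \<odot>\<^bsub>M\<^esub> \<rho> j) {..<d}"
    proof
      show "?a \<in> extensional {..<d} \<and> m = finsum M (\<lambda>j. f2_const (Rn n) (?a j) \<odot>\<^bsub>M\<^esub> \<rho> j) {..<d}"
        using f2_sum[OF r, of ?a] e A by simp
    next
      fix a assume a: "a \<in> extensional {..<d} \<and> m = finsum M (\<lambda>j. f2_const (Rn n) (a j) \<odot>\<^bsub>M\<^esub> \<rho> j) {..<d}"
      have "{j. j<d \<and> a j} = A" apply (rule uA) using a f2_sum[OF r, of a] by auto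
      then show "a = ?a" using a by (intro extensionalityI[of _ "{..<d}"]) auto
    qed
  qed
qed

lemma symdiff:
  fixes d :: nat
  assumes r: "\<forall>j<d. \<rho> j \<in> carrier M" and A: "A \<subseteq> {..<d}" and B: "B \<subseteq> {..<d}"
  shows "finsum M \<rho> A \<oplus>\<^bsub>M\<^esub> finsum M \<rho> B = finsum M \<rho> ((A - B) \<union> (B - A))"
proof -
  have fin: "finite X" if "X \<subseteq> {..<d}" for X using that finite_subset by blast
  have pi: "\<rho> \<in> X \<rightarrow> carrier M" if "X \<subseteq> {..<d}" for X using that r by auto
  have cl: "finsum M \<rho> X \<in> carrier M" if "X \<subseteq> {..<d}" for X using pi[OF that] by (rule finsum_closed)
  have sA: "finsum M \<rho> A = finsum M \<rho> (A - B) \<oplus>\<^bsub>M\<^esub> finsum M \<rho> (A \<inter> B)"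
  proof -
    have e: "A = (A - B) \<union> (A \<inter> B)" by blast
    have "finsum M \<rho> ((A - B) \<union> (A \<inter> B)) = finsum M \<rho> (A - B) \<oplus>\<^bsub>M\<^esub> finsum M \<rho> (A \<inter> B)"
      by (rule finsum_Un_disjoint) (use fin pi A in auto)
    then show ?thesis using e by simp
  qed
  have sB: "finsum M \<rho> B = finsum M \<rho> (B - A) \<oplus>\<^bsub>M\<^esub> finsum M \<rho> (A \<inter> B)"
  proof -
    have e: "B = (B - A) \<union> (A \<inter> B)" by blast
    have "finsum M \<rho> ((B - A) \<union> (A \<inter> B)) = finsum M \<rho> (B - A) \<oplus>\<^bsub>M\<^esub> finsum M \<rho> (A \<inter> B)"
      by (rule finsum_Un_disjoint) (use fin pi B in auto)
    then show ?thesis using e by simp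
  qed
  have sD: "finsum M \<rho> ((A - B) \<union> (B - A)) = finsum M \<rho> (A - B) \<oplus>\<^bsub>M\<^esub> finsum M \<rho> (B - A)"
    by (rule finsum_Un_disjoint) (use fin pi A B in auto)
  have c1: "finsum M \<rho> (A - B) \<in> carrier M" and c2: "finsum M \<rho> (B - A) \<in> carrier M"
    and c3: "finsum M \<rho> (A \<inter> B) \<in> carrier M" by (rule cl; use A B in blast)+
  show ?thesis unfolding sA sB sD
    by (rule cancel2[OF c1 c3 c2])
qed


lemma backward:
  fixes d :: nat and \<rho>
  assumes b: "f2_basis (Rn n) M d \<rho>"
    and c1: "\<forall>i<n. \<forall>j<d. xvar n i \<odot>\<^bsub>M\<^esub> \<rho> j \<in> {\<rho> j, \<zero>\<^bsub>M\<^esub>}"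
    and c2: "\<forall>j<d. \<forall>k<d. j \<noteq> k \<longrightarrow>
               (\<exists>i<n. (xvar n i \<odot>\<^bsub>M\<^esub> \<rho> j = \<zero>\<^bsub>M\<^esub>) \<noteq> (xvar n i \<odot>\<^bsub>M\<^esub> \<rho> k = \<zero>\<^bsub>M\<^esub>))"
  shows "\<exists>C f. C \<subseteq> cube n \<and> module_iso (Rn n) M (neural_module n C) f"
proof -
  have r: "\<forall>j<d. \<rho> j \<in> carrier M" using b unfolding f2_basis_def by blast
  have pi: "\<rho> \<in> X \<rightarrow> carrier M" if "X \<subseteq> {..<d}" for X using that r by auto
  have fin: "finite X" if "X \<subseteq> {..<d}" for X using that finite_subset by blast
  have cl: "finsum M \<rho> X \<in> carrier M" if "X \<subseteq> {..<d}" for X using pi[OF that] by (rule finsum_closed)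
  have u: "\<forall>m\<in>carrier M. \<exists>!A. A \<subseteq> {..<d} \<and> m = finsum M \<rho> A" using b unfolding basis_iff[OF r] .
  have uu: "A = B" if "A \<subseteq> {..<d}" "B \<subseteq> {..<d}" "finsum M \<rho> A = finsum M \<rho> B" for A B
  proof -
    have "\<exists>!X. X \<subseteq> {..<d} \<and> finsum M \<rho> A = finsum M \<rho> X" using u cl[OF that(1)] by (rule bspec)
    then show ?thesis by (rule ex1_eqD) (use that in auto)
  qed
  have nz: "\<rho> j \<noteq> \<zero>\<^bsub>M\<^esub>" if j: "j < d" for j
  proof
    assume z: "\<rho> j = \<zero>\<^bsub>M\<^esub>"
    have "finsum M \<rho> {j} = \<rho> j" using r j by (simp add: finsum_insert)
    also have "\<dots> = finsum M \<rho> {}" using z by simp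
    finally have "{j} = {}" using uu[of "{j}" "{}"] j by simp
    then show False by simp
  qed
  define cw where "cw j = (\<lambda>i. i < n \<and> xvar n i \<odot>\<^bsub>M\<^esub> \<rho> j \<noteq> \<zero>\<^bsub>M\<^esub>)" for j
  have cwc: "cw j \<in> cube n" for j by (simp add: cw_def cube_def)
  have xin: "xvar n i \<in> carrier (Rn n)" for i by (auto simp: Rn_simps fun_on_def xvar_def)
  have xact: "xvar n i \<odot>\<^bsub>M\<^esub> \<rho> j = (if cw j i then \<rho> j else \<zero>\<^bsub>M\<^esub>)" if "i < n" "j < d" for i j
  proof -
    have "xvar n i \<odot>\<^bsub>M\<^esub> \<rho> j \<in> {\<rho> j, \<zero>\<^bsub>M\<^esub>}" using c1 that by blast
    moreover have "\<rho> j \<noteq> \<zero>\<^bsub>M\<^esub>" using nz that by blast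
    ultimately show ?thesis unfolding cw_def using that(1) by auto
  qed
  have inj: "inj_on cw {..<d}"
  proof (rule inj_onI)
    fix j k assume "j \<in> {..<d}" "k \<in> {..<d}" "cw j = cw k"
    show "j = k"
    proof (rule ccontr)
      assume "j \<noteq> k"
      then obtain i where "i < n" "(xvar n i \<odot>\<^bsub>M\<^esub> \<rho> j = \<zero>\<^bsub>M\<^esub>) \<noteq> (xvar n i \<odot>\<^bsub>M\<^esub> \<rho> k = \<zero>\<^bsub>M\<^esub>)"
        using c2 \<open>j \<in> {..<d}\<close> \<open>k \<in> {..<d}\<close> \<open>j \<noteq> k\<close> by (meson lessThan_iff)
      then have "cw j i \<noteq> cw k i" unfolding cw_def by auto
      then show False using \<open>cw j = cw k\<close> by simp
    qed
  qed
  have ract: "r \<odot>\<^bsub>M\<^esub> \<rho> j = (if r (cw j) then \<rho> j else \<zero>\<^bsub>M\<^esub>)"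
    if rr: "r \<in> carrier (Rn n)" and j: "j < d" for r j
  proof -
    define e where "e k = (\<lambda>c. c \<in> cube n \<and> (\<forall>i<k. c i = cw j i))" for k
    have ec: "e k \<in> carrier (Rn n)" for k by (auto simp: Rn_simps fun_on_def e_def)
    have ek: "k \<le> n \<Longrightarrow> e k \<odot>\<^bsub>M\<^esub> \<rho> j = \<rho> j" for k
    proof (induction k)
      case 0
      have "e 0 = \<one>\<^bsub>Rn n\<^esub>" by (simp add: e_def Rn_simps)
      then show ?case using r j by simp
    next
      case (Suc k)
      define y where "y = (if cw j k then xvar n k else \<one>\<^bsub>Rn n\<^esub> \<oplus>\<^bsub>Rn n\<^esub> xvar n k)"
      have yc: "y \<in> carrier (Rn n)" using xin by (simp add: y_def)
      have kn: "k < n" using Suc by simp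
      have yr: "y \<odot>\<^bsub>M\<^esub> \<rho> j = \<rho> j"
      proof (cases "cw j k")
        case True then show ?thesis using xact[OF kn j] by (simp add: y_def)
      next
        case False
        have "y \<odot>\<^bsub>M\<^esub> \<rho> j = \<one>\<^bsub>Rn n\<^esub> \<odot>\<^bsub>M\<^esub> \<rho> j \<oplus>\<^bsub>M\<^esub> xvar n k \<odot>\<^bsub>M\<^esub> \<rho> j"
          using False smult_l_distr[of "\<one>\<^bsub>Rn n\<^esub>" "xvar n k" "\<rho> j"] xin r j by (simp add: y_def)
        then show ?thesis using xact[OF kn j] False r j by simp
      qed
      have "e (Suc k) = e k \<otimes>\<^bsub>Rn n\<^esub> y"
        using kn by (auto simp: Rn_simps e_def y_def xvar_def less_Suc_eq fun_eq_iff)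
      then have "e (Suc k) \<odot>\<^bsub>M\<^esub> \<rho> j = e k \<odot>\<^bsub>M\<^esub> (y \<odot>\<^bsub>M\<^esub> \<rho> j)"
        using smult_assoc1[OF ec yc] r j by simp
      then show ?case using yr Suc by simp
    qed
    have en: "e n = (\<lambda>c. c = cw j)"
    proof
      fix c show "e n c = (c = cw j)"
        using cwc[of j] unfolding e_def cube_def by (auto simp: fun_eq_iff; metis not_le)
    qed
    have "r \<odot>\<^bsub>M\<^esub> \<rho> j = r \<odot>\<^bsub>M\<^esub> (e n \<odot>\<^bsub>M\<^esub> \<rho> j)" using ek by simp
    also have "\<dots> = (r \<otimes>\<^bsub>Rn n\<^esub> e n) \<odot>\<^bsub>M\<^esub> \<rho> j" using smult_assoc1[OF rr ec] r j by simp
    also have "r \<otimes>\<^bsub>Rn n\<^esub> e n = (if r (cw j) then e n else \<zero>\<^bsub>Rn n\<^esub>)"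
      unfolding en by (rule ext) (auto simp: Rn_simps)
    finally show ?thesis using ek r j by simp
  qed
  have sact: "r \<odot>\<^bsub>M\<^esub> finsum M \<rho> A = finsum M \<rho> {j\<in>A. r (cw j)}"
    if rr: "r \<in> carrier (Rn n)" and A: "A \<subseteq> {..<d}" for r A
  proof -
    have "r \<odot>\<^bsub>M\<^esub> finsum M \<rho> A = finsum M (\<lambda>j. r \<odot>\<^bsub>M\<^esub> \<rho> j) A"
      using finsum_smult_ldistr[OF fin[OF A] rr pi[OF A]] by simp
    also have "\<dots> = finsum M \<rho> {j\<in>A. r (cw j)}"
      by (rule add.finprod_mono_neutral_cong_left[symmetric])
         (use A fin ract rr r in \<open>auto\<close>)
    finally show ?thesis .
  qed
  define coef where "coef m = (THE A. A \<subseteq> {..<d} \<and> m = finsum M \<rho> A)" for m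
  have coefp: "coef m \<subseteq> {..<d} \<and> m = finsum M \<rho> (coef m)" if "m \<in> carrier M" for m
    unfolding coef_def by (rule theI') (use u that in blast)
  have coefe: "coef (finsum M \<rho> A) = A" if "A \<subseteq> {..<d}" for A
  proof -
    have c: "coef (finsum M \<rho> A) \<subseteq> {..<d} \<and> finsum M \<rho> A = finsum M \<rho> (coef (finsum M \<rho> A))"
      by (rule coefp[OF cl[OF that]])
    show ?thesis
    proof (rule uu)
      show "coef (finsum M \<rho> A) \<subseteq> {..<d}" using c by (rule conjunct1)
      show "A \<subseteq> {..<d}" by (rule that)
      show "finsum M \<rho> (coef (finsum M \<rho> A)) = finsum M \<rho> A" using c by (rule sym[OF conjunct2])
    qed
  qed
  define C where "C = cw ` {..<d}"
  define f where "f m = (\<lambda>c. c \<in> cw ` coef m)" for m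
  have "module_iso (Rn n) M (neural_module n C) f"
    unfolding module_iso_def
  proof (intro conjI ballI)
    show "bij_betw f (carrier M) (carrier (neural_module n C))"
      unfolding bij_betw_def
    proof
      show "inj_on f (carrier M)"
      proof (rule inj_onI)
        fix x y assume x: "x \<in> carrier M" and y: "y \<in> carrier M" and "f x = f y"
        have X: "coef x \<subseteq> {..<d}" and xe: "x = finsum M \<rho> (coef x)" using coefp[OF x] by (rule conjunct1, rule conjunct2)
        have Y: "coef y \<subseteq> {..<d}" and ye: "y = finsum M \<rho> (coef y)" using coefp[OF y] by (rule conjunct1, rule conjunct2)
        have "\<forall>c. (c \<in> cw ` coef x) = (c \<in> cw ` coef y)"
          using \<open>f x = f y\<close> unfolding f_def fun_eq_iff by blast
        then have "cw ` coef x = cw ` coef y" by blast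
        then have "coef x = coef y" using inj X Y by (simp add: inj_on_image_eq_iff)
        then have "finsum M \<rho> (coef x) = finsum M \<rho> (coef y)" by (rule arg_cong)
        with xe have "x = finsum M \<rho> (coef y)" by (rule trans)
        then show "x = y" using ye by (rule trans[OF _ sym])
      qed
      show "f ` carrier M = carrier (neural_module n C)"
      proof
        show "f ` carrier M \<subseteq> carrier (neural_module n C)"
        proof
          fix h assume "h \<in> f ` carrier M"
          then obtain m where m: "m \<in> carrier M" and h: "h = f m" by blast
          have "coef m \<subseteq> {..<d}" using coefp[OF m] by (rule conjunct1)
          then have "cw ` coef m \<subseteq> C" unfolding C_def by blast
          then show "h \<in> carrier (neural_module n C)"
            unfolding h f_def nm_simps fun_on_def by blast
        qed
        show "carrier (neural_module n C) \<subseteq> f ` carrier M"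
        proof
          fix g assume "g \<in> carrier (neural_module n C)"
          then have g: "\<And>c. \<not> g c \<Longrightarrow> c \<in> C \<Longrightarrow> False \<Longrightarrow> True" "\<And>c. c \<notin> C \<Longrightarrow> \<not> g c"
            by (auto simp: nm_simps fun_on_def)
          define A where "A = {j. j < d \<and> g (cw j)}"
          have A: "A \<subseteq> {..<d}" by (auto simp: A_def)
          have "f (finsum M \<rho> A) = g"
            unfolding f_def coefe[OF A]
          proof
            fix c show "(c \<in> cw ` A) = g c"
            proof
              assume "c \<in> cw ` A"
              then obtain j where "g (cw j)" "c = cw j" unfolding A_def by blast
              then show "g c" by simp
            next
              assume gc: "g c"
              then have "c \<in> C" using g(2) by blast
              then obtain j where "j < d" "c = cw j" unfolding C_def by blast
              then show "c \<in> cw ` A" using gc unfolding A_def by blast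
            qed
          qed
          then show "g \<in> f ` carrier M" using cl[OF A] by blast
        qed
      qed
    qed
  next
    fix x y assume x: "x \<in> carrier M" and y: "y \<in> carrier M"
    have X0: "coef x \<subseteq> {..<d}" and xe: "x = finsum M \<rho> (coef x)" using coefp[OF x] by (rule conjunct1, rule conjunct2)
    have Y0: "coef y \<subseteq> {..<d}" and ye: "y = finsum M \<rho> (coef y)" using coefp[OF y] by (rule conjunct1, rule conjunct2)
    have xy: "x \<oplus>\<^bsub>M\<^esub> y = finsum M \<rho> ((coef x - coef y) \<union> (coef y - coef x))"
    proof -
      have "x \<oplus>\<^bsub>M\<^esub> y = finsum M \<rho> (coef x) \<oplus>\<^bsub>M\<^esub> finsum M \<rho> (coef y)" by (rule arg_cong2[OF xe ye])
      then show ?thesis using symdiff[OF r X0 Y0] by (rule trans)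
    qed
    have cxy: "coef (x \<oplus>\<^bsub>M\<^esub> y) = (coef x - coef y) \<union> (coef y - coef x)"
      unfolding xy using X0 Y0 by (intro coefe) auto
    then show "f (x \<oplus>\<^bsub>M\<^esub> y) = f x \<oplus>\<^bsub>neural_module n C\<^esub> f y"
    proof -
      have X: "coef x \<subseteq> {..<d}" by (rule X0)
      have Y: "coef y \<subseteq> {..<d}" by (rule Y0)
      have im: "cw ` ((coef x - coef y) \<union> (coef y - coef x)) = (cw ` coef x - cw ` coef y) \<union> (cw ` coef y - cw ` coef x)"
        proof -
        have "coef x - coef y \<subseteq> {..<d}" "coef y - coef x \<subseteq> {..<d}" using X Y by auto
        then show ?thesis unfolding image_Un using inj_on_image_set_diff[OF inj _ Y, of "coef x"] inj_on_image_set_diff[OF inj _ X, of "coef y"] by simp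
      qed
      show ?thesis unfolding f_def nm_simps cxy im by (rule ext) blast
    qed
  next
    fix r x assume rr: "r \<in> carrier (Rn n)" and x: "x \<in> carrier M"
    have X: "coef x \<subseteq> {..<d}" and xe: "x = finsum M \<rho> (coef x)" using coefp[OF x] by (rule conjunct1, rule conjunct2)
    have sub: "{j\<in>coef x. r (cw j)} \<subseteq> {..<d}" using X by auto
    have "r \<odot>\<^bsub>M\<^esub> x = finsum M \<rho> {j\<in>coef x. r (cw j)}"
    proof -
      have "r \<odot>\<^bsub>M\<^esub> x = r \<odot>\<^bsub>M\<^esub> finsum M \<rho> (coef x)" by (rule arg_cong[OF xe])
      then show ?thesis using sact[OF rr X] by (rule trans)
    qed
    then have "coef (r \<odot>\<^bsub>M\<^esub> x) = coef (finsum M \<rho> {j\<in>coef x. r (cw j)})" by (rule arg_cong)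
    then have crx: "coef (r \<odot>\<^bsub>M\<^esub> x) = {j\<in>coef x. r (cw j)}"
      using coefe[OF sub] by (rule trans)
    show "f (r \<odot>\<^bsub>M\<^esub> x) = r \<odot>\<^bsub>neural_module n C\<^esub> f x"
      unfolding f_def nm_simps crx
    proof (rule ext)
      fix c show "(c \<in> cw ` {j \<in> coef x. r (cw j)}) = (c \<in> C \<and> r c \<and> c \<in> cw ` coef x)"
      proof
        assume "c \<in> cw ` {j \<in> coef x. r (cw j)}"
        then obtain j where j: "j \<in> coef x" "r (cw j)" "c = cw j" by blast
        have "j < d" using X j(1) by blast
        then show "c \<in> C \<and> r c \<and> c \<in> cw ` coef x" using j unfolding C_def by blast
      next
        assume h: "c \<in> C \<and> r c \<and> c \<in> cw ` coef x"
        then obtain j where j: "j \<in> coef x" "c = cw j" by blast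
        then show "c \<in> cw ` {j \<in> coef x. r (cw j)}" using h by blast
      qed
    qed
  qed
  moreover have "C \<subseteq> cube n" using cwc by (auto simp: C_def)
  ultimately show ?thesis by blast
qed


lemma finite_cube: "finite (cube n)"
proof -
  have "cube n \<subseteq> (\<lambda>S i. i \<in> S) ` Pow {..<n}"
  proof
    fix c assume c: "c \<in> cube n"
    have "c = (\<lambda>i. i \<in> {i. i < n \<and> c i})"
    proof (rule ext)
      fix i show "c i = (i \<in> {i. i < n \<and> c i})" using c unfolding cube_def by (cases "i < n") auto
    qed
    then show "c \<in> (\<lambda>S i. i \<in> S) ` Pow {..<n}" by blast
  qed
  then show ?thesis by (rule finite_subset) simp
qed

lemma forward:
  assumes Csub: "C \<subseteq> cube n" and iso: "module_iso (Rn n) M (neural_module n C) f"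
  shows "\<exists>d \<rho>. f2_basis (Rn n) M d \<rho> \<and>
            (\<forall>i<n. \<forall>j<d. xvar n i \<odot>\<^bsub>M\<^esub> \<rho> j \<in> {\<rho> j, \<zero>\<^bsub>M\<^esub>}) \<and>
            (\<forall>j<d. \<forall>k<d. j \<noteq> k \<longrightarrow>
               (\<exists>i<n. (xvar n i \<odot>\<^bsub>M\<^esub> \<rho> j = \<zero>\<^bsub>M\<^esub>) \<noteq> (xvar n i \<odot>\<^bsub>M\<^esub> \<rho> k = \<zero>\<^bsub>M\<^esub>)))"
proof -
  have bij: "bij_betw f (carrier M) (fun_on C)"
    using iso unfolding module_iso_def nm_simps by blast
  have add: "\<And>x y. x \<in> carrier M \<Longrightarrow> y \<in> carrier M \<Longrightarrow> f (x \<oplus>\<^bsub>M\<^esub> y) = (\<lambda>c. f x c \<noteq> f y c)"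
    using iso unfolding module_iso_def nm_simps by blast
  have sm: "\<And>r x. r \<in> carrier (Rn n) \<Longrightarrow> x \<in> carrier M \<Longrightarrow> f (r \<odot>\<^bsub>M\<^esub> x) = (\<lambda>c. c \<in> C \<and> r c \<and> f x c)"
    using iso unfolding module_iso_def nm_simps by blast
  have injf: "inj_on f (carrier M)" and imf: "f ` carrier M = fun_on C"
    using bij unfolding bij_betw_def by blast+
  have finC: "finite C" using Csub finite_cube by (rule finite_subset)
  define d where "d = card C"
  obtain cw where cwb: "bij_betw cw {..<d} C"
    using ex_bij_betw_nat_finite[OF finC] unfolding d_def atLeast0LessThan by blast
  have inj: "inj_on cw {..<d}" and imcw: "cw ` {..<d} = C" using cwb unfolding bij_betw_def by blast+
  have cwC: "cw j \<in> C" if "j < d" for j using imcw that by blast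
  have cwc: "cw j \<in> cube n" if "j < d" for j using cwC[OF that] Csub by blast
  have f0: "f \<zero>\<^bsub>M\<^esub> = (\<lambda>c. False)"
  proof -
    have "f (\<zero>\<^bsub>M\<^esub> \<oplus>\<^bsub>M\<^esub> \<zero>\<^bsub>M\<^esub>) = (\<lambda>c. f \<zero>\<^bsub>M\<^esub> c \<noteq> f \<zero>\<^bsub>M\<^esub> c)" by (rule add) simp_all
    then show ?thesis by simp
  qed
  define \<delta> where "\<delta> j = (\<lambda>c. c = cw j)" for j
  have \<delta>in: "\<delta> j \<in> f ` carrier M" if "j < d" for j
    unfolding imf \<delta>_def fun_on_def using cwC[OF that] by blast
  define \<rho> where "\<rho> j = inv_into (carrier M) f (\<delta> j)" for j
  have \<rho>c: "\<rho> j \<in> carrier M" if "j < d" for j unfolding \<rho>_def by (rule inv_into_into[OF \<delta>in[OF that]])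
  have f\<rho>: "f (\<rho> j) = \<delta> j" if "j < d" for j unfolding \<rho>_def by (rule f_inv_into_f[OF \<delta>in[OF that]])
  have r: "\<forall>j<d. \<rho> j \<in> carrier M" using \<rho>c by blast
  have pi: "\<rho> \<in> X \<rightarrow> carrier M" if "X \<subseteq> {..<d}" for X using that \<rho>c by auto
  have cl: "finsum M \<rho> X \<in> carrier M" if "X \<subseteq> {..<d}" for X using pi[OF that] by (rule finsum_closed)
  have fS: "A \<subseteq> {..<d} \<Longrightarrow> f (finsum M \<rho> A) = (\<lambda>c. c \<in> cw ` A)" if "finite A" for A
    using that
  proof (induct A rule: finite_induct)
    case empty
    show ?case using f0 by simp
  next
    case (insert j F)
    have j: "j < d" and F: "F \<subseteq> {..<d}" using insert.prems by auto
    have "finsum M \<rho> (insert j F) = \<rho> j \<oplus>\<^bsub>M\<^esub> finsum M \<rho> F"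
      by (rule finsum_insert) (use insert.hyps pi[OF F] \<rho>c[OF j] in auto)
    then have "f (finsum M \<rho> (insert j F)) = (\<lambda>c. f (\<rho> j) c \<noteq> f (finsum M \<rho> F) c)"
      using add[OF \<rho>c[OF j] cl[OF F]] by simp
    also have "\<dots> = (\<lambda>c. (c = cw j) \<noteq> (c \<in> cw ` F))"
      unfolding f\<rho>[OF j] insert.hyps(3)[OF F] \<delta>_def by simp
    also have "\<dots> = (\<lambda>c. c \<in> cw ` insert j F)"
    proof (rule ext)
      fix c
      have "cw j \<notin> cw ` F"
      proof
        assume "cw j \<in> cw ` F"
        then obtain k where k: "k \<in> F" "cw j = cw k" by blast
        then have "j = k" using inj j F unfolding inj_on_def by blast
        then show False using k insert.hyps(2) by simp
      qed
      then show "((c = cw j) \<noteq> (c \<in> cw ` F)) = (c \<in> cw ` insert j F)" by (cases "c = cw j") simp_all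
    qed
    finally show ?case .
  qed
  have fS': "f (finsum M \<rho> A) = (\<lambda>c. c \<in> cw ` A)" if "A \<subseteq> {..<d}" for A
    using fS[OF finite_subset[OF that finite_lessThan] that] .
  have uS: "A = B" if A: "A \<subseteq> {..<d}" and B: "B \<subseteq> {..<d}" and e: "finsum M \<rho> A = finsum M \<rho> B" for A B
  proof -
    have "(\<lambda>c. c \<in> cw ` A) = (\<lambda>c. c \<in> cw ` B)" using fS'[OF A] fS'[OF B] e by simp
    then have "cw ` A = cw ` B" by (simp add: fun_eq_iff set_eq_iff)
    then show ?thesis using inj A B by (simp add: inj_on_image_eq_iff)
  qed
  have basis: "f2_basis (Rn n) M d \<rho>"
    unfolding basis_iff[OF r]
  proof
    fix m assume m: "m \<in> carrier M"
    define A where "A = {j. j < d \<and> f m (cw j)}"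
    have A: "A \<subseteq> {..<d}" unfolding A_def by blast
    have fm: "f m \<in> fun_on C" using imf m by blast
    have "f (finsum M \<rho> A) = f m"
      unfolding fS'[OF A]
    proof (rule ext)
      fix c show "(c \<in> cw ` A) = f m c"
      proof
        assume "c \<in> cw ` A" then show "f m c" unfolding A_def by blast
      next
        assume fc: "f m c"
        then have "c \<in> C" using fm unfolding fun_on_def by blast
        then obtain j where "j < d" "c = cw j" using imcw by blast
        then show "c \<in> cw ` A" using fc unfolding A_def by blast
      qed
    qed
    then have mA: "m = finsum M \<rho> A" using injf m cl[OF A] unfolding inj_on_def by metis
    show "\<exists>!A. A \<subseteq> {..<d} \<and> m = finsum M \<rho> A"
    proof (rule ex1I[of _ A])
      show "A \<subseteq> {..<d} \<and> m = finsum M \<rho> A" using A mA by (rule conjI)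
    next
      fix B assume B: "B \<subseteq> {..<d} \<and> m = finsum M \<rho> B"
      show "B = A"
      proof (rule uS)
        show "B \<subseteq> {..<d}" using B by (rule conjunct1)
        show "A \<subseteq> {..<d}" by (rule A)
        have "m = finsum M \<rho> B" using B by (rule conjunct2)
        then show "finsum M \<rho> B = finsum M \<rho> A" using mA by (rule trans[OF sym])
      qed
    qed
  qed
  have xin: "xvar n i \<in> carrier (Rn n)" for i by (auto simp: Rn_simps fun_on_def xvar_def)
  have nz: "\<rho> j \<noteq> \<zero>\<^bsub>M\<^esub>" if j: "j < d" for j
  proof
    assume "\<rho> j = \<zero>\<^bsub>M\<^esub>"
    then have "f (\<rho> j) = (\<lambda>c. False)" using f0 by simp
    then have "\<delta> j (cw j) = False" using f\<rho>[OF j] by simp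
    then show False unfolding \<delta>_def by simp
  qed
  have xact: "xvar n i \<odot>\<^bsub>M\<^esub> \<rho> j = (if cw j i then \<rho> j else \<zero>\<^bsub>M\<^esub>)" if i: "i < n" and j: "j < d" for i j
  proof -
    have e: "f (xvar n i \<odot>\<^bsub>M\<^esub> \<rho> j) = (\<lambda>c. c \<in> C \<and> xvar n i c \<and> c = cw j)"
      using sm[OF xin \<rho>c[OF j]] f\<rho>[OF j] unfolding \<delta>_def by simp
    have cl2: "xvar n i \<odot>\<^bsub>M\<^esub> \<rho> j \<in> carrier M" using xin \<rho>c[OF j] by simp
    show ?thesis
    proof (cases "cw j i")
      case True
      have "f (xvar n i \<odot>\<^bsub>M\<^esub> \<rho> j) = f (\<rho> j)"
        unfolding e f\<rho>[OF j] \<delta>_def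
      proof (rule ext)
        fix c show "(c \<in> C \<and> xvar n i c \<and> c = cw j) = (c = cw j)"
          using cwC[OF j] cwc[OF j] True unfolding xvar_def by blast
      qed
      then have "xvar n i \<odot>\<^bsub>M\<^esub> \<rho> j = \<rho> j" using injf cl2 \<rho>c[OF j] unfolding inj_on_def by blast
      then show ?thesis using True by simp
    next
      case False
      have "f (xvar n i \<odot>\<^bsub>M\<^esub> \<rho> j) = f \<zero>\<^bsub>M\<^esub>"
        unfolding e f0
      proof (rule ext)
        fix c show "(c \<in> C \<and> xvar n i c \<and> c = cw j) = False"
          using False unfolding xvar_def by blast
      qed
      then have "xvar n i \<odot>\<^bsub>M\<^esub> \<rho> j = \<zero>\<^bsub>M\<^esub>" using injf cl2 unfolding inj_on_def by blast
      then show ?thesis using False by simp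
    qed
  qed
  have c1: "\<forall>i<n. \<forall>j<d. xvar n i \<odot>\<^bsub>M\<^esub> \<rho> j \<in> {\<rho> j, \<zero>\<^bsub>M\<^esub>}"
    using xact by simp
  have c2: "\<forall>j<d. \<forall>k<d. j \<noteq> k \<longrightarrow>
               (\<exists>i<n. (xvar n i \<odot>\<^bsub>M\<^esub> \<rho> j = \<zero>\<^bsub>M\<^esub>) \<noteq> (xvar n i \<odot>\<^bsub>M\<^esub> \<rho> k = \<zero>\<^bsub>M\<^esub>))"
  proof (intro allI impI)
    fix j k assume j: "j < d" and k: "k < d" and jk: "j \<noteq> k"
    have "cw j \<noteq> cw k" using inj j k jk unfolding inj_on_def by blast
    then obtain i where i: "cw j i \<noteq> cw k i" by (auto simp: fun_eq_iff)
    have "i < n"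
    proof (rule ccontr)
      assume "\<not> i < n"
      then show False using i cwc[OF j] cwc[OF k] unfolding cube_def by auto
    qed
    moreover have "(xvar n i \<odot>\<^bsub>M\<^esub> \<rho> j = \<zero>\<^bsub>M\<^esub>) \<noteq> (xvar n i \<odot>\<^bsub>M\<^esub> \<rho> k = \<zero>\<^bsub>M\<^esub>)"
      using xact[OF \<open>i < n\<close> j] xact[OF \<open>i < n\<close> k] nz[OF j] nz[OF k] i by auto
    ultimately show "\<exists>i<n. (xvar n i \<odot>\<^bsub>M\<^esub> \<rho> j = \<zero>\<^bsub>M\<^esub>) \<noteq> (xvar n i \<odot>\<^bsub>M\<^esub> \<rho> k = \<zero>\<^bsub>M\<^esub>)" by blast
  qed
  show ?thesis using basis c1 c2 by blast
qed

end

theorem theorem2: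
  fixes n :: nat
    and M :: "((nat \<Rightarrow> bool) \<Rightarrow> bool, 'a, 'x) module_scheme"
  assumes "n \<ge> 1"
    and "module (Rn n) M"
  shows "(\<exists>C f. C \<subseteq> cube n \<and> module_iso (Rn n) M (neural_module n C) f) \<longleftrightarrow>
         (\<exists>d \<rho>. f2_basis (Rn n) M d \<rho> \<and>
            (\<forall>i<n. \<forall>j<d. xvar n i \<odot>\<^bsub>M\<^esub> \<rho> j \<in> {\<rho> j, \<zero>\<^bsub>M\<^esub>}) \<and>
            (\<forall>j<d. \<forall>k<d. j \<noteq> k \<longrightarrow>
               (\<exists>i<n. (xvar n i \<odot>\<^bsub>M\<^esub> \<rho> j = \<zero>\<^bsub>M\<^esub>) \<noteq> (xvar n i \<odot>\<^bsub>M\<^esub> \<rho> k = \<zero>\<^bsub>M\<^esub>))))"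
proof -
  interpret NM n M unfolding NM_def by (rule assms(2))
  show ?thesis
  proof
    assume "\<exists>C f. C \<subseteq> cube n \<and> module_iso (Rn n) M (neural_module n C) f"
    then obtain C f where "C \<subseteq> cube n" "module_iso (Rn n) M (neural_module n C) f" by blast
    then show "\<exists>d \<rho>. f2_basis (Rn n) M d \<rho> \<and>
            (\<forall>i<n. \<forall>j<d. xvar n i \<odot>\<^bsub>M\<^esub> \<rho> j \<in> {\<rho> j, \<zero>\<^bsub>M\<^esub>}) \<and>
            (\<forall>j<d. \<forall>k<d. j \<noteq> k \<longrightarrow>
               (\<exists>i<n. (xvar n i \<odot>\<^bsub>M\<^esub> \<rho> j = \<zero>\<^bsub>M\<^esub>) \<noteq> (xvar n i \<odot>\<^bsub>M\<^esub> \<rho> k = \<zero>\<^bsub>M\<^esub>)))"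
      by (rule forward)
  next
    assume "\<exists>d \<rho>. f2_basis (Rn n) M d \<rho> \<and>
            (\<forall>i<n. \<forall>j<d. xvar n i \<odot>\<^bsub>M\<^esub> \<rho> j \<in> {\<rho> j, \<zero>\<^bsub>M\<^esub>}) \<and>
            (\<forall>j<d. \<forall>k<d. j \<noteq> k \<longrightarrow>
               (\<exists>i<n. (xvar n i \<odot>\<^bsub>M\<^esub> \<rho> j = \<zero>\<^bsub>M\<^esub>) \<noteq> (xvar n i \<odot>\<^bsub>M\<^esub> \<rho> k = \<zero>\<^bsub>M\<^esub>)))"
    then obtain d \<rho> where "f2_basis (Rn n) M d \<rho>"
        "\<forall>i<n. \<forall>j<d. xvar n i \<odot>\<^bsub>M\<^esub> \<rho> j \<in> {\<rho> j, \<zero>\<^bsub>M\<^esub>}"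
        "\<forall>j<d. \<forall>k<d. j \<noteq> k \<longrightarrow>
               (\<exists>i<n. (xvar n i \<odot>\<^bsub>M\<^esub> \<rho> j = \<zero>\<^bsub>M\<^esub>) \<noteq> (xvar n i \<odot>\<^bsub>M\<^esub> \<rho> k = \<zero>\<^bsub>M\<^esub>))"
      by blast
    then show "\<exists>C f. C \<subseteq> cube n \<and> module_iso (Rn n) M (neural_module n C) f"
      by (rule backward)
  qed
qed

end
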